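(* Let $n,d,c\in\mathbb{N}$ with $d\ge 50$ and $c\in[d]$, let $\mathcal{F}\subseteq 2^{[n]}$ be a hereditary family with $\delta(\mathcal{F})\ge 2^{d-1}-c+1$, and let $P$ be an isolated pile of $\mathcal{F}$ with $\sum_{x\in P}\omega_{\mathcal{F}}(x)<2^d-c$. Let $u\ge 1$ be the number of good vertices in $P$. Then every $N\in\mathcal{N}$ satisfies $|N|\le f_u$.
   Context: A family is hereditary if it is closed under taking subsets. $d_{\mathcal{F}}(x)=|\{F\in\mathcal{F}:x\in F\}|$, $\delta(\mathcal{F})=\min_x d_{\mathcal{F}}(x)$, $N(x)=\bigcup_{x\in F\in\mathcal{F}}F$. The weight of $x$ is $\omega_{\mathcal{F}}(x)=\sum_{x\in F\in\mathcal{F}}\frac{1}{|F|}$. A vertex $x$ is good if $|N(x)|\ge d+1$ and bad if $|N(x)|=d$. A set $P\subseteq[n]$ with $|P|=d$ is a pile of $\mathcal{F}$ if $P\subseteq N(y)$ for every $y\in P$, and there exists $z\in P$ with $N(z)=P$; a pile is isolated if it is disjoint from every other pile. Given the pile $P$, let $\mathcal{G}=\{S\subseteq P: S\in\mathcal{F}\}$, $\mathcal{M}=2^{P}\setminus\mathcal{G}$, and $\mathcal{N}=\{P\setminus M: M\in\mathcal{M}\}$. For a positive integer $u$, $f_u$ is the unique integer $f$ with $2^{f}-f\le u<2^{f+1}-(f+1)$. *)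

theory Defs
  imports Complex_Main
begin

definition hereditary :: "nat set set \<Rightarrow> bool" where
  "hereditary F \<longleftrightarrow> (\<forall>A\<in>F. \<forall>B. B \<subseteq> A \<longrightarrow> B \<in> F)"

definition degree :: "nat set set \<Rightarrow> nat \<Rightarrow> nat" where
  "degree F x = card {A \<in> F. x \<in> A}"

definition min_degree :: "nat \<Rightarrow> nat set set \<Rightarrow> nat" where
  "min_degree n F = Min ((\<lambda>x. degree F x) ` {1..n})"

definition nbhd :: "nat set set \<Rightarrow> nat \<Rightarrow> nat set" where
  "nbhd F x = \<Union> {A \<in> F. x \<in> A}"

definition weight :: "nat set set \<Rightarrow> nat \<Rightarrow> real" where
  "weight F x = (\<Sum>A \<in> {A \<in> F. x \<in> A}. 1 / real (card A))"

definition good :: "nat set set \<Rightarrow> nat \<Rightarrow> nat \<Rightarrow> bool" where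
  "good F d x \<longleftrightarrow> card (nbhd F x) \<ge> d + 1"

definition bad :: "nat set set \<Rightarrow> nat \<Rightarrow> nat \<Rightarrow> bool" where
  "bad F d x \<longleftrightarrow> card (nbhd F x) = d"

definition is_pile :: "nat \<Rightarrow> nat \<Rightarrow> nat set set \<Rightarrow> nat set \<Rightarrow> bool" where
  "is_pile n d F P \<longleftrightarrow> P \<subseteq> {1..n} \<and> card P = d \<and>
     (\<forall>y\<in>P. P \<subseteq> nbhd F y) \<and> (\<exists>z\<in>P. nbhd F z = P)"

definition isolated_pile :: "nat \<Rightarrow> nat \<Rightarrow> nat set set \<Rightarrow> nat set \<Rightarrow> bool" where
  "isolated_pile n d F P \<longleftrightarrow> is_pile n d F P \<and>
     (\<forall>Q. is_pile n d F Q \<and> Q \<noteq> P \<longrightarrow> P \<inter> Q = {})"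

definition pile_G :: "nat set set \<Rightarrow> nat set \<Rightarrow> nat set set" where
  "pile_G F P = {S. S \<subseteq> P \<and> S \<in> F}"

definition pile_M :: "nat set set \<Rightarrow> nat set \<Rightarrow> nat set set" where
  "pile_M F P = Pow P - pile_G F P"

definition pile_N :: "nat set set \<Rightarrow> nat set \<Rightarrow> nat set set" where
  "pile_N F P = (\<lambda>M. P - M) ` pile_M F P"

definition f_of :: "nat \<Rightarrow> nat" where
  "f_of u = (THE f::nat. (2::int)^f - int f \<le> int u \<and> int u < 2^(f+1) - int (f+1))"

end

theory Submission
  imports Defs
begin


lemma g_mono: "a \<le> b \<Longrightarrow> (2::int)^a - int a \<le> 2^b - int b"
proof (induction b)
  case 0 then show ?case by simp
next
  case (Suc b)
  show ?case
  proof (cases "a = Suc b")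
    case True then show ?thesis by simp
  next
    case False
    hence "a \<le> b" using Suc.prems by simp
    hence "(2::int)^a - int a \<le> 2^b - int b" using Suc.IH by simp
    moreover have "(2::int)^b \<ge> 1" by simp
    moreover have "(2::int)^(Suc b) = 2*2^b" by simp
    ultimately show ?thesis by linarith
  qed
qed

lemma f_of_prop:
  assumes "u \<ge> 1"
  shows "(2::int)^(f_of u) - int (f_of u) \<le> int u \<and> int u < 2^(f_of u+1) - int (f_of u+1)"
proof -
  let ?Q = "\<lambda>f::nat. int u < 2^(f+1) - int (f+1)"
  have ex: "?Q u"
  proof -
    have "int u + 2 \<le> 2^(u+1) - int u" 
    proof (induction u)
      case 0 then show ?case by simp
    next
      case (Suc u)
      have "(2::int)^u \<ge> 1" by simp
      hence "(2::int)^(u+1) \<ge> 2" by simp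
      then show ?case using Suc by simp
    qed
    then show ?thesis by simp
  qed
  define f where "f = (LEAST f. ?Q f)"
  have Qf: "?Q f" unfolding f_def by (rule LeastI[of ?Q, OF ex])
  have f0: "f \<noteq> 0"
  proof
    assume "f = 0"
    with Qf have "int u < 1" by simp
    with assms show False by simp
  qed
  have "f - 1 < (LEAST f. ?Q f)" using f0 f_def by simp
  then have nQ: "\<not> ?Q (f - 1)" by (rule not_less_Least)
  hence P1: "(2::int)^f - int f \<le> int u" using f0 by simp
  have uniq: "g = f" if "(2::int)^g - int g \<le> int u \<and> int u < 2^(g+1) - int (g+1)" for g
  proof (rule ccontr)
    assume "g \<noteq> f"
    then consider "g < f" | "f < g" by linarith
    then show False
    proof cases
      case 1
      hence "(2::int)^(g+1) - int (g+1) \<le> 2^f - int f" using g_mono[of "g+1" f] by simp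
      then show False using that P1 by simp
    next
      case 2
      hence "(2::int)^(f+1) - int (f+1) \<le> 2^g - int g" using g_mono[of "f+1" g] by simp
      then show False using that Qf by simp
    qed
  qed
  have "f_of u = f" unfolding f_of_def
  proof (rule the_equality)
    show "(2::int)^f - int f \<le> int u \<and> int u < 2^(f+1) - int (f+1)" using P1 Qf by (rule conjI)
  next
    fix g assume "(2::int)^g - int g \<le> int u \<and> int u < 2^(g+1) - int (g+1)"
    then show "g = f" by (rule uniq)
  qed
  then show ?thesis using P1 Qf by simp
qed

lemma le_f_of:
  assumes "u \<ge> 1" "(2::int)^k - int k \<le> int u"
  shows "k \<le> f_of u"
proof (rule ccontr)
  assume "\<not> k \<le> f_of u"
  hence "f_of u + 1 \<le> k" by simp
  hence "(2::int)^(f_of u + 1) - int (f_of u + 1) \<le> 2^k - int k" by (rule g_mono)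
  then show False using f_of_prop[OF assms(1)] assms(2) by simp
qed

lemma exp12: "j \<ge> 7 \<Longrightarrow> 12*j \<le> (2::nat)^j"
proof (induction j rule: nat_induct_at_least)
  case base then show ?case by simp
next
  case (Suc n)
  have "(2::nat)^7 \<le> 2^n" using Suc.hyps by (intro power_increasing) auto
  hence "12 \<le> (2::nat)^n" by simp
  moreover have "(2::nat)^(Suc n) = 2^n + 2^n" by simp
  moreover have "12 * Suc n = 12*n + 12" by simp
  ultimately show ?case using Suc.IH by linarith
qed

lemma exp4: "a \<ge> 13 \<Longrightarrow> 4*a^2 \<le> (2::nat)^(a-2)"
proof (induction a rule: nat_induct_at_least)
  case base then show ?case by simp
next
  case (Suc n)
  have "4 + n*8 \<le> n*(n*4)"
  proof -
    have "13*(n*4) \<le> n*(n*4)" using Suc.hyps by (intro mult_le_mono) auto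
    hence "52*n \<le> n*(n*4)" by simp
    then show ?thesis using Suc.hyps by linarith
  qed
  hence "4*(Suc n)^2 \<le> 2*(4*n^2)" by (simp add: power2_eq_square algebra_simps)
  also have "\<dots> \<le> 2*2^(n-2)" using Suc.IH by simp
  also have "Suc n - 2 = Suc (n - 2)" using Suc.hyps by simp
  hence "2*2^(n-2) = (2::nat)^(Suc n - 2)" by simp
  finally show ?case .
qed

lemma six_le:
  assumes "d \<ge> (50::nat)" "2^j \<le> 2*d"
  shows "6*j \<le> d"
proof (rule ccontr)
  assume "\<not> 6*j \<le> d"
  hence "j \<ge> 9" using assms by linarith
  hence "12*j \<le> 2^j" using exp12 by simp
  then show False using assms \<open>\<not> 6*j \<le> d\<close> by linarith
qed

lemma card_contain:
  assumes "finite P" "x \<in> P"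
  shows "card {S. S \<subseteq> P \<and> x \<in> S} = 2^(card P - 1)"
proof -
  have "{S. S \<subseteq> P \<and> x \<in> S} = insert x ` Pow (P - {x})" 
  proof (rule set_eqI, rule iffI)
    fix S assume S: "S \<in> {S. S \<subseteq> P \<and> x \<in> S}"
    hence "S = insert x (S - {x})" by auto
    moreover have "S - {x} \<in> Pow (P - {x})" using S by auto
    ultimately show "S \<in> insert x ` Pow (P - {x})" by (rule image_eqI)
  next
    fix S assume "S \<in> insert x ` Pow (P - {x})"
    then show "S \<in> {S. S \<subseteq> P \<and> x \<in> S}" using assms by auto
  qed
  moreover have "inj_on (insert x) (Pow (P - {x}))" by (rule inj_onI) (auto simp: insert_ident)
  ultimately have "card {S. S \<subseteq> P \<and> x \<in> S} = card (Pow (P - {x}))" by (simp add: card_image)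
  also have "\<dots> = 2^(card P - 1)" using assms by (simp add: card_Pow)
  finally show ?thesis .
qed

lemma card_split: "finite A \<Longrightarrow> card A = card {x\<in>A. Q x} + card {x\<in>A. \<not> Q x}"
proof -
  assume fA: "finite A"
  have "card A = card ({x\<in>A. Q x} \<union> {x\<in>A. \<not> Q x})" by (rule arg_cong[where f=card]) auto
  also have "\<dots> = card {x\<in>A. Q x} + card {x\<in>A. \<not> Q x}" by (rule card_Un_disjoint) (use fA in auto)
  finally show ?thesis .
qed



theorem mainTheorem18:
  fixes n d c :: nat and F :: "nat set set" and P :: "nat set"
  assumes "d \<ge> 50"
    and "c \<in> {1..d}"
    and "F \<subseteq> Pow {1..n}"
    and "hereditary F"
    and "int (min_degree n F) \<ge> 2^(d-1) - int c + 1"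
    and "isolated_pile n d F P"
    and "(\<Sum>x\<in>P. weight F x) < 2^d - real c"
    and "card {x \<in> P. good F d x} \<ge> 1"
  shows "\<forall>N \<in> pile_N F P. card N \<le> f_of (card {x \<in> P. good F d x})"
proof -
  note d50 = assms(1)
  have c1: "1 \<le> c" and cd: "c \<le> d" using assms(2) by auto
  note Fsub = assms(3)
  have herD: "B \<in> F" if "A \<in> F" "B \<subseteq> A" for A B
    using assms(4) that unfolding hereditary_def by blast
  note mind = assms(5)
  have pile: "is_pile n d F P" using assms(6) unfolding isolated_pile_def by simp
  have Psub: "P \<subseteq> {1..n}" and cardP: "card P = d" and Pnb: "\<And>y. y\<in>P \<Longrightarrow> P \<subseteq> nbhd F y"
    using pile unfolding is_pile_def by auto
  obtain z where zP: "z \<in> P" and nbz: "nbhd F z = P" using pile unfolding is_pile_def by auto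
  have finP: "finite P" using Psub finite_subset by blast
  have finF: "finite F" using Fsub finite_subset by (metis finite_Pow_iff finite_atLeastAtMost)
  have finA: "finite A" if "A \<in> F" for A using that Fsub finite_subset by blast
  have in_nb: "A \<subseteq> nbhd F x" if "A \<in> F" "x \<in> A" for A x
    using that unfolding nbhd_def by blast
  have nb_fin: "finite (nbhd F x)" for x
  proof -
    have "nbhd F x \<subseteq> {1..n}" using Fsub unfolding nbhd_def by blast
    then show ?thesis using finite_subset by blast
  qed
  define U where "U = {x \<in> P. good F d x}"
  define Bd where "Bd = P - U"
  have UP: "U \<subseteq> P" unfolding U_def by auto
  have finU: "finite U" using UP finP finite_subset by blast
  have badP: "nbhd F x = P" if "x \<in> Bd" for x
  proof -
    have xP: "x \<in> P" and ng: "\<not> good F d x" using that unfolding Bd_def U_def by auto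
    have "card (nbhd F x) \<le> d" using ng unfolding good_def by simp
    then show ?thesis using Pnb[OF xP] nb_fin cardP by (metis card_seteq)
  qed
  have goodE: "\<exists>y. y \<notin> P \<and> {x, y} \<in> F" if "x \<in> U" for x
  proof -
    have xP: "x \<in> P" and g: "good F d x" using that unfolding U_def by auto
    have "\<not> nbhd F x \<subseteq> P"
    proof
      assume "nbhd F x \<subseteq> P"
      hence "card (nbhd F x) \<le> d" using card_mono finP cardP by metis
      then show False using g unfolding good_def by simp
    qed
    then obtain y A where "y \<notin> P" "A \<in> F" "x \<in> A" "y \<in> A" unfolding nbhd_def by blast
    then show ?thesis using herD[of A "{x,y}"] by auto
  qed
  have zB: "z \<in> Bd"
    using zP nbz cardP unfolding Bd_def U_def good_def by simp

  define Cs where "Cs = pile_N F P"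
  have Cs_iff: "C \<in> Cs \<longleftrightarrow> C \<subseteq> P \<and> P - C \<notin> F" for C
  proof
    assume "C \<in> Cs"
    then obtain M where "M \<subseteq> P" "M \<notin> F" "C = P - M"
      unfolding Cs_def pile_N_def pile_M_def pile_G_def by auto
    moreover have "P - (P - M) = M" using \<open>M \<subseteq> P\<close> by auto
    ultimately show "C \<subseteq> P \<and> P - C \<notin> F" by auto
  next
    assume h: "C \<subseteq> P \<and> P - C \<notin> F"
    have "P - C \<in> pile_M F P" using h unfolding pile_M_def pile_G_def by auto
    moreover have "C = P - (P - C)" using h by auto
    ultimately show "C \<in> Cs" unfolding Cs_def pile_N_def by blast
  qed
  have Cs_down: "C' \<in> Cs" if "C \<in> Cs" "C' \<subseteq> C" for C C'
  proof -
    have "C' \<subseteq> P" using that Cs_iff by blast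
    moreover have "P - C' \<notin> F"
    proof
      assume "P - C' \<in> F"
      hence "P - C \<in> F" using herD[of "P - C'" "P - C"] that by blast
      then show False using that Cs_iff by blast
    qed
    ultimately show ?thesis using Cs_iff by blast
  qed
  have CsP: "Cs \<subseteq> Pow P" using Cs_iff by blast
  have finCs: "finite Cs" using CsP finP by (meson finite_Pow_iff finite_subset)
  define m where "m x = card {C \<in> Cs. x \<notin> C}" for x
  define a where "a x = card {C \<in> Cs. x \<in> C}" for x
  define ot where "ot x = card {A \<in> F. x \<in> A \<and> \<not> A \<subseteq> P}" for x
  have ma: "m x + a x = card Cs" for x
  proof -
    show ?thesis unfolding m_def a_def using card_split[OF finCs, of "\<lambda>C. x \<notin> C"] by simp
  qed
  have deg_split: "degree F x = card {A \<in> F. x \<in> A \<and> A \<subseteq> P} + ot x" for x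
  proof -
    have f: "finite {A \<in> F. x \<in> A}" using finF by simp
    have "{A \<in> {A \<in> F. x \<in> A}. A \<subseteq> P} = {A \<in> F. x \<in> A \<and> A \<subseteq> P}" by auto
    moreover have "{A \<in> {A \<in> F. x \<in> A}. \<not> A \<subseteq> P} = {A \<in> F. x \<in> A \<and> \<not> A \<subseteq> P}" by auto
    ultimately show ?thesis unfolding degree_def ot_def using card_split[OF f, of "\<lambda>A. A \<subseteq> P"] by simp
  qed
  have in_split: "card {A \<in> F. x \<in> A \<and> A \<subseteq> P} + m x = 2^(d-1)" if xP: "x \<in> P" for x
  proof -
    have e1: "{A \<in> {S. S \<subseteq> P \<and> x \<in> S}. A \<in> F} = {A \<in> F. x \<in> A \<and> A \<subseteq> P}" by auto
    have e2: "{A \<in> {S. S \<subseteq> P \<and> x \<in> S}. A \<notin> F} = {S. S \<subseteq> P \<and> x \<in> S \<and> S \<notin> F}" by auto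
    have e3: "{S. S \<subseteq> P \<and> x \<in> S \<and> S \<notin> F} = (\<lambda>C. P - C) ` {C \<in> Cs. x \<notin> C}"
    proof (rule set_eqI, rule iffI)
      fix S assume S: "S \<in> {S. S \<subseteq> P \<and> x \<in> S \<and> S \<notin> F}"
      have "P - (P - S) = S" using S by auto
      hence "P - S \<in> Cs" using S Cs_iff by auto
      moreover have "S = P - (P - S)" using S by auto
      ultimately show "S \<in> (\<lambda>C. P - C) ` {C \<in> Cs. x \<notin> C}" using S by blast
    next
      fix S assume "S \<in> (\<lambda>C. P - C) ` {C \<in> Cs. x \<notin> C}"
      then obtain C where "C \<in> Cs" "x \<notin> C" "S = P - C" by auto
      then show "S \<in> {S. S \<subseteq> P \<and> x \<in> S \<and> S \<notin> F}" using xP Cs_iff by auto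
    qed
    have e4: "inj_on (\<lambda>C. P - C) {C \<in> Cs. x \<notin> C}"
      by (rule inj_onI) (use CsP in \<open>blast\<close>)
    have fin1: "finite {S. S \<subseteq> P \<and> x \<in> S}" using finP by simp
    have "2^(d-1) = card {S. S \<subseteq> P \<and> x \<in> S}" using card_contain[OF finP xP] cardP by simp
    also have "\<dots> = card {A \<in> F. x \<in> A \<and> A \<subseteq> P} + card {S. S \<subseteq> P \<and> x \<in> S \<and> S \<notin> F}"
      using card_split[OF fin1, of "\<lambda>A. A \<in> F"] e1 e2 by simp
    also have "card {S. S \<subseteq> P \<and> x \<in> S \<and> S \<notin> F} = m x"
      unfolding m_def e3 using card_image[OF e4] .
    finally show ?thesis by simp
  qed
  have deg_min: "min_degree n F \<le> degree F x" if "x \<in> P" for x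
    unfolding min_degree_def using that Psub by (intro Min_le) auto
  have key: "m x + 1 \<le> ot x + c" if xP: "x \<in> P" for x
  proof -
    have "int (2^(d-1)) - int c + 1 \<le> int (degree F x)" using mind deg_min[OF xP] by simp
    moreover have "int (card {A \<in> F. x \<in> A \<and> A \<subseteq> P} + m x) = int (2^(d-1))"
      using in_split[OF xP] by simp
    moreover have "int (degree F x) = int (card {A \<in> F. x \<in> A \<and> A \<subseteq> P} + ot x)"
      using deg_split[of x] by simp
    ultimately show ?thesis by simp
  qed
  have ot_bad: "ot x = 0" if "x \<in> Bd" for x
  proof -
    have e: "{A \<in> F. x \<in> A \<and> \<not> A \<subseteq> P} = {}" using in_nb badP[OF that] by blast
    show ?thesis unfolding ot_def e by (rule card.empty)
  qed
  have mbad: "m x + 1 \<le> c" if "x \<in> Bd" for x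
    using key[of x] ot_bad[OF that] that unfolding Bd_def by simp

  define G where "G = {A \<in> F. A \<subseteq> P}"
  define F2 where "F2 = {A \<in> F. \<not> A \<subseteq> P}"
  define E where "E = (\<Sum>A\<in>F2. real (card (A \<inter> P)) / real (card A))"
  have finF2: "finite F2" using finF unfolding F2_def by simp
  have finG: "finite G" using finF unfolding G_def by simp
  have E_nonneg: "E \<ge> 0" unfolding E_def by (intro sum_nonneg) auto
  have Fne: "F \<noteq> {}"
  proof -
    have "z \<in> nbhd F z" using nbz zP by simp
    then show ?thesis unfolding nbhd_def by auto
  qed
  have emp: "{} \<in> G" using Fne herD unfolding G_def by blast
  have cardG: "card G + card Cs = 2^d"
  proof -
    have "Pow P = G \<union> (\<lambda>C. P - C) ` Cs"
    proof (rule set_eqI, rule iffI)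
      fix S assume S: "S \<in> Pow P"
      show "S \<in> G \<union> (\<lambda>C. P - C) ` Cs"
      proof (cases "S \<in> F")
        case True then show ?thesis using S unfolding G_def by auto
      next
        case False
        have "P - (P - S) = S" using S by auto
        hence "P - S \<in> Cs" using S Cs_iff False by auto
        moreover have "S = P - (P - S)" using S by auto
        ultimately show ?thesis by blast
      qed
    next
      fix S assume "S \<in> G \<union> (\<lambda>C. P - C) ` Cs"
      then show "S \<in> Pow P" unfolding G_def by auto
    qed
    moreover have "G \<inter> (\<lambda>C. P - C) ` Cs = {}" unfolding G_def using Cs_iff by auto
    moreover have "inj_on (\<lambda>C. P - C) Cs" by (rule inj_onI) (use CsP in \<open>blast\<close>)
    ultimately have "card (Pow P) = card G + card ((\<lambda>C. P - C) ` Cs)"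
      using finG finCs by (simp add: card_Un_disjoint)
    hence "card (Pow P) = card G + card Cs" using card_image[OF \<open>inj_on (\<lambda>C. P - C) Cs\<close>] by simp
    then show ?thesis using finP cardP by (simp add: card_Pow)
  qed
  have sumG: "(\<Sum>A\<in>G. real (card (A \<inter> P)) / real (card A)) = real (card G) - 1"
  proof -
    have "(\<Sum>A\<in>G. real (card (A \<inter> P)) / real (card A)) = 
       real (card ({} \<inter> P)) / real (card ({}::nat set)) + (\<Sum>A\<in>G - {{}}. real (card (A \<inter> P)) / real (card A))"
      by (rule sum.remove[OF finG emp])
    also have "(\<Sum>A\<in>G - {{}}. real (card (A \<inter> P)) / real (card A)) = (\<Sum>A\<in>G - {{}}. 1)"
    proof (rule sum.cong)
      fix A assume A: "A \<in> G - {{}}"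
      hence "A \<inter> P = A" "finite A" "A \<noteq> {}" unfolding G_def using finA by auto
      then show "real (card (A \<inter> P)) / real (card A) = 1" by simp
    qed simp
    also have "(\<Sum>A\<in>G - {{}}. (1::real)) = real (card (G - {{}}))" by simp
    also have "card (G - {{}}) = card G - 1" using emp finG by (simp add: card_Diff_singleton)
    also have "real (card G - 1) = real (card G) - 1"
    proof -
      have "card G \<noteq> 0" using emp finG by auto
      then show ?thesis by (simp add: of_nat_diff)
    qed
    finally show ?thesis by simp
  qed
  have wsum: "(\<Sum>x\<in>P. weight F x) = real (card G) - 1 + E"
  proof -
    have "(\<Sum>x\<in>P. weight F x) = (\<Sum>x\<in>P. \<Sum>A\<in>{A \<in> F. x \<in> A}. 1 / real (card A))"
      unfolding weight_def by simp
    also have "\<dots> = (\<Sum>A\<in>F. \<Sum>x\<in>{x \<in> P. x \<in> A}. 1 / real (card A))"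
      by (rule sum.swap_restrict[OF finP finF])
    also have "\<dots> = (\<Sum>A\<in>F. real (card (A \<inter> P)) / real (card A))"
    proof (rule sum.cong)
      fix A assume "A \<in> F"
      have "{x \<in> P. x \<in> A} = A \<inter> P" by auto
      then show "(\<Sum>x\<in>{x \<in> P. x \<in> A}. 1 / real (card A)) = real (card (A \<inter> P)) / real (card A)"
        by simp
    qed simp
    also have "\<dots> = (\<Sum>A\<in>G. real (card (A \<inter> P)) / real (card A)) + E"
    proof -
      have "F = G \<union> F2" "G \<inter> F2 = {}" unfolding G_def F2_def by auto
      then show ?thesis unfolding E_def using finG finF2 by (simp add: sum.union_disjoint)
    qed
    finally show ?thesis using sumG by simp
  qed
  have hE: "E < real (card Cs) - real c + 1"
  proof -
    have "real (card G + card Cs) = real ((2::nat)^d)" using cardG by simp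
    hence "real (card G) = 2^d - real (card Cs)" by simp
    then show ?thesis using wsum assms(7) by simp
  qed
  have cCs: "c \<le> card Cs" using hE E_nonneg by simp

  have "\<forall>x\<in>U. \<exists>y. y \<notin> P \<and> {x, y} \<in> F" using goodE by blast
  from bchoice[OF this] obtain yf where yf: "\<forall>x\<in>U. yf x \<notin> P \<and> {x, yf x} \<in> F" by blast
  have Epair: "E \<ge> real (card U) / 2"
  proof -
    define Q where "Q = (\<lambda>x. {x, yf x}) ` U"
    have injQ: "inj_on (\<lambda>x. {x, yf x}) U"
    proof (rule inj_onI)
      fix x x' assume x: "x \<in> U" and x': "x' \<in> U" and e: "{x, yf x} = {x', yf x'}"
      have "x \<in> P" "x' \<in> P" "yf x' \<notin> P" using x x' yf UP by auto
      moreover have "x \<in> {x', yf x'}" using e by blast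
      ultimately show "x = x'" by auto
    qed
    have QF2: "Q \<subseteq> F2" unfolding Q_def F2_def using yf by auto
    have "(\<Sum>A\<in>Q. real (card (A \<inter> P)) / real (card A)) = (\<Sum>x\<in>U. real (card ({x, yf x} \<inter> P)) / real (card {x, yf x}))"
      unfolding Q_def by (rule sum.reindex[OF injQ, unfolded comp_def])
    also have "\<dots> = (\<Sum>x\<in>U. 1/2)"
    proof (rule sum.cong)
      fix x assume x: "x \<in> U"
      have "x \<in> P" "yf x \<notin> P" using x yf UP by auto
      hence "{x, yf x} \<inter> P = {x}" "x \<noteq> yf x" by auto
      then show "real (card ({x, yf x} \<inter> P)) / real (card {x, yf x}) = 1/2" by simp
    qed simp
    also have "\<dots> = real (card U) / 2" by simp
    finally have "(\<Sum>A\<in>Q. real (card (A \<inter> P)) / real (card A)) = real (card U) / 2" .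
    moreover have "(\<Sum>A\<in>Q. real (card (A \<inter> P)) / real (card A)) \<le> E"
      unfolding E_def by (rule sum_mono2[OF finF2 QF2]) auto
    ultimately show ?thesis by simp
  qed
  have Single: "{w} \<in> Cs" if w: "w \<in> Bd" for w
  proof -
    have "m w < card Cs" using mbad[OF w] cCs by simp
    hence "a w > 0" using ma[of w] by simp
    hence "{C \<in> Cs. w \<in> C} \<noteq> {}" unfolding a_def by (metis card.empty less_irrefl)
    then obtain C where "C \<in> Cs" "w \<in> C" by blast
    then show ?thesis using Cs_down by blast
  qed
  have u1: "card U \<ge> 1" using assms(8) unfolding U_def by simp
  have cardUB: "card U + card Bd = d"
  proof -
    have "card Bd = card P - card U" unfolding Bd_def using UP finU by (simp add: card_Diff_subset)
    moreover have "card U \<le> card P" using UP finP card_mono by blast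
    ultimately show ?thesis using cardP by simp
  qed
  show ?thesis unfolding U_def[symmetric]
  proof
    fix N assume NC: "N \<in> pile_N F P"
    hence NCs: "N \<in> Cs" unfolding Cs_def by simp
    hence NP: "N \<subseteq> P" using Cs_iff by blast
    have finN: "finite N" using NP finP finite_subset by blast
    define k where "k = card N"
    have PowN: "Pow N \<subseteq> Cs" using NCs Cs_down by blast
    have cardPowN: "card (Pow N) = 2^k" unfolding k_def using finN by (simp add: card_Pow)
    have suff: "card N \<le> f_of (card U)" if "(2::int)^k - int k \<le> int (card U)"
      using le_f_of[OF u1] that unfolding k_def by simp
    define BO where "BO = {w\<in>Bd. w \<notin> N}"
    define BI where "BI = {w\<in>Bd. w \<in> N}"
    have finBd: "finite Bd" unfolding Bd_def using finP by simp
    have cardB: "card Bd = card BI + card BO" unfolding BO_def BI_def by (rule card_split[OF finBd])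
    have cardBI: "card BI \<le> k" unfolding k_def BI_def by (rule card_mono[OF finN]) auto
    show "card N \<le> f_of (card U)"
    proof (cases "BO = {}")
      case False
      then obtain y where yBO: "y \<in> BO" by blast
      have yB: "y \<in> Bd" and yN: "y \<notin> N" using yBO unfolding BO_def by auto
      define S where "S = Pow N \<union> (\<lambda>w. {w}) ` (BO - {y})"
      have finBO: "finite BO" unfolding BO_def using finBd by simp
      have S_sub: "S \<subseteq> {C \<in> Cs. y \<notin> C}"
      proof
        fix C assume "C \<in> S"
        then consider "C \<in> Pow N" | w where "w \<in> BO" "w \<noteq> y" "C = {w}" unfolding S_def by auto
        then show "C \<in> {C \<in> Cs. y \<notin> C}"
        proof cases
          case 1 then show ?thesis using PowN yN by auto
        next
          case 2 then show ?thesis using Single unfolding BO_def by auto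
        qed
      qed
      have cardS: "card S = 2^k + (card BO - 1)"
      proof -
        have disj: "Pow N \<inter> (\<lambda>w. {w}) ` (BO - {y}) = {}" unfolding BO_def by auto
        have "card ((\<lambda>w. {w}) ` (BO - {y})) = card (BO - {y})"
          by (rule card_image) (auto simp: inj_on_def)
        also have "\<dots> = card BO - 1" using yBO finBO by simp
        finally have "card ((\<lambda>w. {w}) ` (BO - {y})) = card BO - 1" .
        then show ?thesis unfolding S_def using disj finN finBO cardPowN
          by (simp add: card_Un_disjoint)
      qed
      have "card S \<le> m y" unfolding m_def using S_sub finCs by (intro card_mono) auto
      moreover have "card BO \<noteq> 0" using yBO finBO by auto
      hence "card BO - 1 + 1 = card BO" by simp
      ultimately have "2^k + card BO \<le> d" using cardS mbad[OF yB] cd by linarith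
      hence "int (2^k) + int (card BO) \<le> int d" by linarith
      moreover have "int (card U) + int (card BI) + int (card BO) = int d" using cardUB cardB by simp
      moreover have "int (card BI) \<le> int k" using cardBI by simp
      ultimately show ?thesis by (intro suff) simp
    next
      case True
      hence BdN: "Bd \<subseteq> N" unfolding BO_def by auto
      define M where "M = P - N"
      have MU: "M \<subseteq> U" unfolding M_def using BdN unfolding Bd_def by auto
      have cardM: "card M = d - k" unfolding M_def k_def using NP finN cardP by (simp add: card_Diff_subset)
      have kd: "k \<le> d" unfolding k_def using NP finP cardP card_mono by blast
      have "card M \<le> card U" using MU finU card_mono by blast
      hence Ubig: "d - k \<le> card U" using cardM by simp
      show ?thesis
      proof (cases "2^k \<le> d")
        case True
        have "int (2^k) \<le> int d" using True by (simp only: of_nat_le_iff)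
        hence "(2::int)^k \<le> int d" by simp
        moreover have "int d - int k \<le> int (card U)" using Ubig kd by linarith
        ultimately show ?thesis by (intro suff) linarith
      next
        case False
        hence kbig: "d < 2^k" by simp
        have zN: "z \<in> N" using zB BdN by blast
        have az: "a z \<le> m z"
        proof -
          have "inj_on (\<lambda>C. C - {z}) {C \<in> Cs. z \<in> C}"
          proof (rule inj_onI)
            fix C C' assume "C \<in> {C \<in> Cs. z \<in> C}" "C' \<in> {C \<in> Cs. z \<in> C}" "C - {z} = C' - {z}"
            then show "C = C'" by (metis CollectD insert_Diff)
          qed
          moreover have "(\<lambda>C. C - {z}) ` {C \<in> Cs. z \<in> C} \<subseteq> {C \<in> Cs. z \<notin> C}"
            using Cs_down by blast
          moreover have "finite {C \<in> Cs. z \<notin> C}" using finCs by simp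
          ultimately show ?thesis unfolding a_def m_def by (rule card_inj_on_le)
        qed
        have mz: "m z + 1 \<le> c" by (rule mbad[OF zB])
        have Csle: "card Cs + 2 \<le> c + d" using ma[of z] az mz cd by linarith
        have Ed: "E < real d - 1"
        proof -
          have "real (card Cs + 2) \<le> real (c + d)" using Csle by (simp only: of_nat_le_iff)
          hence "real (card Cs) + 2 \<le> real c + real d" by simp
          then show ?thesis using hE by linarith
        qed
        have Cs2d: "card Cs \<le> 2*d" using Csle cd by linarith
        have size6: "6 * card C \<le> d" if C: "C \<in> Cs" for C
        proof -
          have "Pow C \<subseteq> Cs" using C Cs_down by blast
          hence "card (Pow C) \<le> card Cs" using finCs card_mono by blast
          moreover have "finite C" using C CsP finP finite_subset by blast
          ultimately have "2^(card C) \<le> 2*d" using Cs2d by (simp add: card_Pow)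
          then show ?thesis using six_le[OF d50] by blast
        qed
        have k6: "6 * k \<le> d" unfolding k_def using size6[OF NCs] .
        have finM: "finite M" unfolding M_def using finP by simp
        have MP: "M \<subseteq> P" unfolding M_def by auto
        have suma: "6 * (\<Sum>x\<in>M. a x) \<le> d * d"
        proof -
          have "(\<Sum>x\<in>M. a x) = (\<Sum>x\<in>M. \<Sum>C\<in>{C \<in> Cs. x \<in> C}. (1::nat))" unfolding a_def by simp
          also have "\<dots> = (\<Sum>C\<in>Cs. \<Sum>x\<in>{x \<in> M. x \<in> C}. (1::nat))"
            by (rule sum.swap_restrict[OF finM finCs])
          also have "\<dots> = (\<Sum>C\<in>Cs. card {x \<in> M. x \<in> C})" by simp
          also have "\<dots> = (\<Sum>C\<in>Cs - Pow N. card {x \<in> M. x \<in> C}) + (\<Sum>C\<in>Pow N. card {x \<in> M. x \<in> C})"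
            by (rule sum.subset_diff[OF PowN finCs])
          also have "(\<Sum>C\<in>Pow N. card {x \<in> M. x \<in> C}) = 0"
          proof -
            have "\<forall>C\<in>Pow N. {x \<in> M. x \<in> C} = {}" unfolding M_def by auto
            then have "\<forall>C\<in>Pow N. card {x \<in> M. x \<in> C} = 0" by (metis card.empty)
            then show ?thesis by (rule sum.neutral)
          qed
          finally have e: "(\<Sum>x\<in>M. a x) = (\<Sum>C\<in>Cs - Pow N. card {x \<in> M. x \<in> C})" by simp
          have "6 * (\<Sum>C\<in>Cs - Pow N. card {x \<in> M. x \<in> C}) = (\<Sum>C\<in>Cs - Pow N. 6 * card {x \<in> M. x \<in> C})"
            by (simp add: sum_distrib_left)
          also have "\<dots> \<le> (\<Sum>C\<in>Cs - Pow N. d)"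
          proof (rule sum_mono)
            fix C assume C: "C \<in> Cs - Pow N"
            have "finite C" using C CsP finP finite_subset by blast
            hence "card {x \<in> M. x \<in> C} \<le> card C" by (intro card_mono) auto
            then show "6 * card {x \<in> M. x \<in> C} \<le> d" using size6[of C] C by simp
          qed
          also have "\<dots> = card (Cs - Pow N) * d" by simp
          finally have h1: "6 * (\<Sum>C\<in>Cs - Pow N. card {x \<in> M. x \<in> C}) \<le> card (Cs - Pow N) * d" .
          have "card (Cs - Pow N) = card Cs - 2^k"
            using card_Diff_subset[OF _ PowN] finN cardPowN by simp
          hence "card (Cs - Pow N) \<le> d" using Cs2d kbig by simp
          hence "card (Cs - Pow N) * d \<le> d * d" by (rule mult_le_mono1)
          with h1 have "6 * (\<Sum>C\<in>Cs - Pow N. card {x \<in> M. x \<in> C}) \<le> d * d" by (rule le_trans)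
          then show ?thesis unfolding e .
        qed
        have False
        proof (cases "\<exists>A\<in>F2. A \<inter> P \<noteq> {} \<and> d < 4 * card A")
          case True
          then obtain A where AF2: "A \<in> F2" and AP: "A \<inter> P \<noteq> {}" and Ad: "d < 4 * card A" by blast
          obtain x where xA: "x \<in> A" and xP: "x \<in> P" using AP by blast
          obtain y where yA: "y \<in> A" and yP: "y \<notin> P" using AF2 unfolding F2_def by blast
          have AF: "A \<in> F" using AF2 unfolding F2_def by simp
          have finA': "finite A" using finA[OF AF] .
          define ca where "ca = card A"
          have ca13: "ca \<ge> 13" using Ad d50 unfolding ca_def by linarith
          have xy: "x \<noteq> y" using xP yP by auto
          define Bs where "Bs = (\<lambda>S. S \<union> {x, y}) ` Pow (A - {x, y})"
          have injB: "inj_on (\<lambda>S. S \<union> {x, y}) (Pow (A - {x, y}))"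
          proof (rule inj_onI)
            fix S S' assume "S \<in> Pow (A - {x, y})" "S' \<in> Pow (A - {x, y})" "S \<union> {x, y} = S' \<union> {x, y}"
            then show "S = S'" by blast
          qed
          have cardBs: "card Bs = 2^(ca - 2)"
          proof -
            have "card (A - {x, y}) = ca - 2" unfolding ca_def
              using card_Diff_subset[of "{x,y}" A] xA yA xy by simp
            moreover have "finite (A - {x, y})" using finA' by simp
            ultimately show ?thesis unfolding Bs_def using card_image[OF injB] by (simp add: card_Pow)
          qed
          have BsF2: "Bs \<subseteq> F2"
          proof
            fix B assume "B \<in> Bs"
            then obtain S where "S \<subseteq> A - {x, y}" "B = S \<union> {x, y}" unfolding Bs_def by auto
            hence "B \<subseteq> A" "y \<in> B" using xA yA by auto
            then show "B \<in> F2" unfolding F2_def using herD[OF AF] yP by auto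
          qed
          have tmB: "real (card (B \<inter> P)) / real (card B) \<ge> 1 / real ca" if B: "B \<in> Bs" for B
          proof -
            obtain S where "S \<subseteq> A - {x, y}" "B = S \<union> {x, y}" using B unfolding Bs_def by auto
            hence BA: "B \<subseteq> A" and xB: "x \<in> B" using xA yA by auto
            have finB: "finite B" using BA finA' finite_subset by blast
            have "card B \<le> ca" unfolding ca_def using BA finA' card_mono by blast
            moreover have "card B > 0" using xB finB card_gt_0_iff by blast
            moreover have "card (B \<inter> P) > 0"
            proof -
              have "B \<inter> P \<noteq> {}" using xB xP by blast
              moreover have "finite (B \<inter> P)" using finB by simp
              ultimately show ?thesis by (simp add: card_gt_0_iff)
            qed
            ultimately have r1: "real (card B) \<le> real ca" "real (card B) > 0" "real (card (B \<inter> P)) \<ge> 1"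
              by auto
            have "1 / real ca \<le> 1 / real (card B)" using r1 by (intro divide_left_mono) auto
            also have "\<dots> \<le> real (card (B \<inter> P)) / real (card B)" using r1 by (intro divide_right_mono) auto
            finally show ?thesis .
          qed
          have "E \<ge> (\<Sum>B\<in>Bs. real (card (B \<inter> P)) / real (card B))"
            unfolding E_def by (rule sum_mono2[OF finF2 BsF2]) auto
          moreover have "(\<Sum>B\<in>Bs. real (card (B \<inter> P)) / real (card B)) \<ge> (\<Sum>B\<in>Bs. 1 / real ca)"
            using tmB by (rule sum_mono)
          moreover have "(\<Sum>B\<in>Bs. 1 / real ca) = real (2^(ca-2)) / real ca" using cardBs by simp
          moreover have "real (2^(ca-2)) / real ca \<ge> 4 * real ca"
          proof -
            have "4*ca^2 \<le> 2^(ca-2)" using exp4[OF ca13] .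
            hence "real (4*ca^2) \<le> real (2^(ca-2))" by (simp only: of_nat_le_iff)
            hence "4 * real ca * real ca \<le> real (2^(ca-2))" by (simp add: power2_eq_square)
            moreover have "real ca > 0" using ca13 by simp
            ultimately show ?thesis by (simp add: le_divide_eq)
          qed
          moreover have "4 * real ca > real d" using Ad unfolding ca_def by linarith
          ultimately show False using Ed by linarith
        next
          case False
          hence small: "4 * card A \<le> d" if "A \<in> F2" "A \<inter> P \<noteq> {}" for A using that by auto
          define T where "T = real (card Cs) - real c + 1"
          have ET: "E < T" unfolding T_def using hE .
          have step1: "real d * E \<ge> 4 * (\<Sum>A\<in>F2. real (card (A \<inter> P)))"
          proof -
            have "real d * E = (\<Sum>A\<in>F2. real d * (real (card (A \<inter> P)) / real (card A)))"
              unfolding E_def by (simp add: sum_distrib_left)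
            moreover have "(\<Sum>A\<in>F2. 4 * real (card (A \<inter> P))) \<le> (\<Sum>A\<in>F2. real d * (real (card (A \<inter> P)) / real (card A)))"
            proof (rule sum_mono)
              fix A assume A: "A \<in> F2"
              show "4 * real (card (A \<inter> P)) \<le> real d * (real (card (A \<inter> P)) / real (card A))"
              proof (cases "A \<inter> P = {}")
                case True then show ?thesis by simp
              next
                case False
                have AF: "A \<in> F" using A unfolding F2_def by simp
                have "card A > 0" using False finA[OF AF] card_gt_0_iff by blast
                moreover have "4 * card A \<le> d" using small[OF A False] .
                hence "real (4 * card A) \<le> real d" by (simp only: of_nat_le_iff)
                hence "4 * real (card A) \<le> real d" by simp
                ultimately have "4 \<le> real d / real (card A)" by (simp add: le_divide_eq)
                then have "4 * real (card (A \<inter> P)) \<le> (real d / real (card A)) * real (card (A \<inter> P))"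
                  by (intro mult_right_mono) auto
                then show ?thesis by simp
              qed
            qed
            ultimately show ?thesis by (simp add: sum_distrib_left)
          qed
          have step2: "(\<Sum>A\<in>F2. real (card (A \<inter> P))) = (\<Sum>x\<in>P. real (ot x))"
          proof -
            have "(\<Sum>A\<in>F2. card (A \<inter> P)) = (\<Sum>A\<in>F2. \<Sum>x\<in>{x \<in> P. x \<in> A}. (1::nat))"
            proof (rule sum.cong)
              fix A assume "A \<in> F2"
              have "{x \<in> P. x \<in> A} = A \<inter> P" by auto
              then show "card (A \<inter> P) = (\<Sum>x\<in>{x \<in> P. x \<in> A}. (1::nat))" by simp
            qed simp
            also have "\<dots> = (\<Sum>x\<in>P. \<Sum>A\<in>{A \<in> F2. x \<in> A}. (1::nat))"
              by (rule sum.swap_restrict[OF finF2 finP])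
            also have "\<dots> = (\<Sum>x\<in>P. ot x)"
            proof (rule sum.cong)
              fix x assume "x \<in> P"
              have "{A \<in> F2. x \<in> A} = {A \<in> F. x \<in> A \<and> \<not> A \<subseteq> P}" unfolding F2_def by auto
              then show "(\<Sum>A\<in>{A \<in> F2. x \<in> A}. (1::nat)) = ot x" unfolding ot_def by simp
            qed simp
            finally show ?thesis by (metis of_nat_sum)
          qed
          have step3: "(\<Sum>x\<in>P. real (ot x)) \<ge> (\<Sum>x\<in>M. real (ot x))"
            by (rule sum_mono2[OF finP MP]) auto
          have step4: "real (ot x) \<ge> T - real (a x)" if "x \<in> M" for x
          proof -
            have "m x + 1 \<le> ot x + c" using key[of x] that MP by blast
            hence "real (m x + 1) \<le> real (ot x + c)" by (simp only: of_nat_le_iff)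
            hence "real (m x) + 1 \<le> real (ot x) + real c" by simp
            moreover have "real (m x + a x) = real (card Cs)" using ma[of x] by simp
            hence "real (m x) + real (a x) = real (card Cs)" by simp
            ultimately show ?thesis unfolding T_def by linarith
          qed
          define SA where "SA = (\<Sum>x\<in>M. real (a x))"
          have step5: "(\<Sum>x\<in>M. real (ot x)) \<ge> real (card M) * T - SA"
          proof -
            have "(\<Sum>x\<in>M. real (ot x)) \<ge> (\<Sum>x\<in>M. T - real (a x))" using step4 by (rule sum_mono)
            moreover have "(\<Sum>x\<in>M. T - real (a x)) = real (card M) * T - SA"
              unfolding SA_def by (simp add: sum_subtractf)
            ultimately show ?thesis by simp
          qed
          have SA6: "6 * SA \<le> real d * real d"
          proof -
            have "real (6 * (\<Sum>x\<in>M. a x)) \<le> real (d * d)" using suma by (simp only: of_nat_le_iff)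
            then show ?thesis unfolding SA_def by simp
          qed
          define cM where "cM = real (card M)"
          define dr where "dr = real d"
          have "5 * d \<le> 6 * card M" using cardM k6 kd by linarith
          hence "real (5 * d) \<le> real (6 * card M)" by (simp only: of_nat_le_iff)
          hence cM6: "6 * cM \<ge> 5 * dr" unfolding cM_def dr_def by simp
          have cMpos: "cM \<ge> 0" unfolding cM_def by simp
          have "real (card M) \<le> real (card U)" using \<open>card M \<le> card U\<close> by (simp only: of_nat_le_iff)
          hence EcM: "E \<ge> cM / 2" unfolding cM_def using Epair by linarith
          have "cM * T \<ge> cM * E" using ET cMpos by (simp add: mult_left_mono)
          moreover have "(4 * cM - dr) * E = 4 * (cM * E) - dr * E" by (simp add: algebra_simps)
          ultimately have ineq: "(4 * cM - dr) * E \<le> 4 * SA"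
            using step1 step2 step3 step5 unfolding cM_def[symmetric] dr_def[symmetric] by linarith
          have "dr \<ge> 0" unfolding dr_def by simp
          hence pos: "4 * cM - dr \<ge> 0" using cM6 by linarith
          have "(4 * cM - dr) * E \<ge> (4 * cM - dr) * (cM / 2)" using EcM pos by (rule mult_left_mono)
          moreover have "(4*cM - dr)*(cM/2) = ((cM - 5*dr/6)*(4*cM + 7*dr/3))/2 + 35*(dr*dr)/36"
            by (simp add: field_simps)
          moreover have "(cM - 5*dr/6)*(4*cM + 7*dr/3) \<ge> 0"
            using cM6 cMpos by (intro mult_nonneg_nonneg) (auto simp: dr_def)
          moreover have "dr * dr > 0" unfolding dr_def using d50 by simp
          moreover have "6 * SA \<le> dr * dr" using SA6 unfolding dr_def .
          ultimately show False using ineq by linarith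
        qed
        then show ?thesis ..
      qed
    qed
  qed
qed
end
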